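(* Let $0\to(M,\alpha_M)\to(K,\alpha_K)\xrightarrow{\pi}(L,\alpha_L)\to0$ and $0\to(N,\alpha_N)\to(H,\alpha_H)\xrightarrow{\tau}(K,\alpha_K)\to0$ be central extensions of Hom-Leibniz $n$-algebras. (a) If $\pi\circ\tau:(H,\alpha_H)\to(L,\alpha_L)$ is a universal $\alpha$-central extension, then $\tau$ is a universal central extension. (b) If $\tau$ is a universal central extension, then $\pi\circ\tau$ is an $\alpha$-central extension which is universal over central extensions: for every central extension $\omega:(P,\alpha_P)\to(L,\alpha_L)$ there is a unique homomorphism $\Phi:(H,\alpha_H)\to(P,\alpha_P)$ with $\omega\circ\Phi=\pi\circ\tau$.
   Context: Fix a field $\mathbb K$ and $n\ge2$. A (multiplicative) Hom-Leibniz $n$-algebra is a $\mathbb K$-vector space $L$ with an $n$-linear bracket and a linear map $\alpha_L$ preserving the bracket, satisfying $[[x_1,\dots,x_n],\alpha_L(y_1),\dots,\alpha_L(y_{n-1})]=\sum_{i=1}^n[\alpha_L(x_1),\dots,[x_i,y_1,\dots,y_{n-1}],\dots,\alpha_L(x_n)]$. Homomorphisms preserve brackets and commute with twisting maps. Center $Z(K)$: elements $x$ with every bracket having $x$ in some position equal to $0$. An extension of $L$ is a surjective homomorphism $\pi:K\to L$ with kernel $M$; central if $M\subseteq Z(K)$; $\alpha$-central if every bracket with $n-1$ entries in $\alpha_K(M)$ and the remaining entry (any position) in $K$ vanishes. A central extension $\pi:K\to L$ is universal central (resp. universal $\alpha$-central) if for every central (resp. $\alpha$-central) extension $\pi':K'\to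 L$ there is a unique homomorphism $h:K\to K'$ with $\pi'\circ h=\pi$. *)

theory Defs
  imports Main "HOL-Library.Product_Plus"
begin

text \<open>A Hom-Leibniz n-algebra over a field 'k is represented by a carrier set inside a type
  'a with an (ambient) abelian group structure, a scalar multiplication, an n-ary bracket
  (applied to lists of length n) and a twisting map.\<close>

record ('k, 'a) hlnalg =
  carr :: "'a set"
  smul :: "'k \<Rightarrow> 'a \<Rightarrow> 'a"
  brk  :: "'a list \<Rightarrow> 'a"
  tw   :: "'a \<Rightarrow> 'a"

definition vspace :: "('k::field, 'a::ab_group_add) hlnalg \<Rightarrow> bool" where
  "vspace A \<longleftrightarrow>
     0 \<in> carr A \<and>
     (\<forall>x\<in>carr A. \<forall>y\<in>carr A. x + y \<in> carr A) \<and>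
     (\<forall>c. \<forall>x\<in>carr A. smul A c x \<in> carr A) \<and>
     (\<forall>c. \<forall>x\<in>carr A. \<forall>y\<in>carr A. smul A c (x + y) = smul A c x + smul A c y) \<and>
     (\<forall>a b. \<forall>x\<in>carr A. smul A (a + b) x = smul A a x + smul A b x) \<and>
     (\<forall>a b. \<forall>x\<in>carr A. smul A a (smul A b x) = smul A (a * b) x) \<and>
     (\<forall>x\<in>carr A. smul A 1 x = x)"

definition lin_map :: "('k::field, 'a::ab_group_add) hlnalg \<Rightarrow> ('k, 'b::ab_group_add) hlnalg
    \<Rightarrow> ('a \<Rightarrow> 'b) \<Rightarrow> bool" where
  "lin_map A B f \<longleftrightarrow>
     (\<forall>x\<in>carr A. f x \<in> carr B) \<and>
     (\<forall>x\<in>carr A. \<forall>y\<in>carr A. f (x + y) = f x + f y) \<and>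
     (\<forall>c. \<forall>x\<in>carr A. f (smul A c x) = smul B c (f x))"

definition ntuple :: "nat \<Rightarrow> ('k, 'a) hlnalg \<Rightarrow> 'a list \<Rightarrow> bool" where
  "ntuple n A xs \<longleftrightarrow> length xs = n \<and> set xs \<subseteq> carr A"

definition hom_leibniz :: "nat \<Rightarrow> ('k::field, 'a::ab_group_add) hlnalg \<Rightarrow> bool" where
  "hom_leibniz n A \<longleftrightarrow>
     vspace A \<and> lin_map A A (tw A) \<and>
     (\<forall>xs. ntuple n A xs \<longrightarrow> brk A xs \<in> carr A) \<and>
     (\<forall>xs i x y. ntuple n A xs \<and> i < n \<and> x \<in> carr A \<and> y \<in> carr A \<longrightarrow>
        brk A (xs[i := x + y]) = brk A (xs[i := x]) + brk A (xs[i := y])) \<and>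
     (\<forall>xs i c x. ntuple n A xs \<and> i < n \<and> x \<in> carr A \<longrightarrow>
        brk A (xs[i := smul A c x]) = smul A c (brk A (xs[i := x]))) \<and>
     (\<forall>xs. ntuple n A xs \<longrightarrow> tw A (brk A xs) = brk A (map (tw A) xs)) \<and>
     (\<forall>xs ys. ntuple n A xs \<and> ntuple (n - 1) A ys \<longrightarrow>
        brk A (brk A xs # map (tw A) ys) =
          (\<Sum>i<n. brk A ((map (tw A) xs)[i := brk A (xs ! i # ys)])))"

definition hom :: "nat \<Rightarrow> ('k::field, 'a::ab_group_add) hlnalg \<Rightarrow> ('k, 'b::ab_group_add) hlnalg
    \<Rightarrow> ('a \<Rightarrow> 'b) \<Rightarrow> bool" where
  "hom n A B f \<longleftrightarrow>
     lin_map A B f \<and>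
     (\<forall>xs. ntuple n A xs \<longrightarrow> f (brk A xs) = brk B (map f xs)) \<and>
     (\<forall>x\<in>carr A. f (tw A x) = tw B (f x))"

definition kernel :: "('k, 'a) hlnalg \<Rightarrow> ('a \<Rightarrow> 'b::zero) \<Rightarrow> 'a set" where
  "kernel K f = {x \<in> carr K. f x = 0}"

definition center :: "nat \<Rightarrow> ('k, 'a::zero) hlnalg \<Rightarrow> 'a set" where
  "center n K = {x \<in> carr K. \<forall>xs i. ntuple n K xs \<and> i < n \<longrightarrow> brk K (xs[i := x]) = 0}"

definition ext :: "nat \<Rightarrow> ('k::field, 'a::ab_group_add) hlnalg \<Rightarrow> ('k, 'b::ab_group_add) hlnalg
    \<Rightarrow> ('a \<Rightarrow> 'b) \<Rightarrow> bool" where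
  "ext n K L p \<longleftrightarrow> hom_leibniz n K \<and> hom_leibniz n L \<and> hom n K L p \<and> p ` carr K = carr L"

definition central_ext :: "nat \<Rightarrow> ('k::field, 'a::ab_group_add) hlnalg \<Rightarrow> ('k, 'b::ab_group_add) hlnalg
    \<Rightarrow> ('a \<Rightarrow> 'b) \<Rightarrow> bool" where
  "central_ext n K L p \<longleftrightarrow> ext n K L p \<and> kernel K p \<subseteq> center n K"

definition alpha_central_ext :: "nat \<Rightarrow> ('k::field, 'a::ab_group_add) hlnalg \<Rightarrow> ('k, 'b::ab_group_add) hlnalg
    \<Rightarrow> ('a \<Rightarrow> 'b) \<Rightarrow> bool" where
  "alpha_central_ext n K L p \<longleftrightarrow> ext n K L p \<and>
     (\<forall>xs i. ntuple n K xs \<and> i < n \<and> (\<forall>j<n. j \<noteq> i \<longrightarrow> xs ! j \<in> tw K ` kernel K p)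
        \<longrightarrow> brk K xs = 0)"

definition lifts_uniquely :: "nat \<Rightarrow> ('k::field, 'a::ab_group_add) hlnalg \<Rightarrow> ('k, 'q::ab_group_add) hlnalg
    \<Rightarrow> ('q \<Rightarrow> 'b) \<Rightarrow> ('a \<Rightarrow> 'b) \<Rightarrow> bool" where
  "lifts_uniquely n K P w p \<longleftrightarrow>
     (\<exists>h. hom n K P h \<and> (\<forall>x\<in>carr K. w (h x) = p x) \<and>
        (\<forall>h'. hom n K P h' \<and> (\<forall>x\<in>carr K. w (h' x) = p x) \<longrightarrow> (\<forall>x\<in>carr K. h' x = h x)))"

text \<open>Universality is relative to the type 'q in which the competing extensions live.\<close>
definition universal_central_ext :: "nat \<Rightarrow> 'q::ab_group_add itself \<Rightarrow> ('k::field, 'a::ab_group_add) hlnalg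
    \<Rightarrow> ('k, 'b::ab_group_add) hlnalg \<Rightarrow> ('a \<Rightarrow> 'b) \<Rightarrow> bool" where
  "universal_central_ext n T K L p \<longleftrightarrow> central_ext n K L p \<and>
     (\<forall>(P :: ('k, 'q) hlnalg) w. central_ext n P L w \<longrightarrow> lifts_uniquely n K P w p)"

definition universal_alpha_central_ext :: "nat \<Rightarrow> 'q::ab_group_add itself \<Rightarrow> ('k::field, 'a::ab_group_add) hlnalg
    \<Rightarrow> ('k, 'b::ab_group_add) hlnalg \<Rightarrow> ('a \<Rightarrow> 'b) \<Rightarrow> bool" where
  "universal_alpha_central_ext n T K L p \<longleftrightarrow> central_ext n K L p \<and>
     (\<forall>(P :: ('k, 'q) hlnalg) w. alpha_central_ext n P L w \<longrightarrow> lifts_uniquely n K P w p)"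

end

theory Submission
  imports Defs
begin


lemma vs_simps:
  assumes "vspace A"
  shows "0 \<in> carr A" "\<And>x y. x\<in>carr A \<Longrightarrow> y\<in>carr A \<Longrightarrow> x + y \<in> carr A"
   "\<And>c x. x\<in>carr A \<Longrightarrow> smul A c x \<in> carr A"
   "\<And>c x y. x\<in>carr A \<Longrightarrow> y\<in>carr A \<Longrightarrow> smul A c (x + y) = smul A c x + smul A c y"
   "\<And>a b x. x\<in>carr A \<Longrightarrow> smul A (a + b) x = smul A a x + smul A b x"
   "\<And>a b x. x\<in>carr A \<Longrightarrow> smul A a (smul A b x) = smul A (a * b) x"
   "\<And>x. x\<in>carr A \<Longrightarrow> smul A 1 x = x"
  using assms unfolding vspace_def by auto

lemma vs_smul0:
  assumes "vspace A" "x \<in> carr A" shows "smul A 0 x = 0"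
proof -
  have "smul A (0+0) x = smul A 0 x + smul A 0 x" using vs_simps(5)[OF assms(1) assms(2)] .
  thus ?thesis by simp
qed

lemma vs_neg:
  assumes "vspace A" "x \<in> carr A" shows "smul A (-1) x = - x"
proof -
  have "smul A (-1 + 1) x = smul A (-1) x + smul A 1 x" using vs_simps(5)[OF assms(1) assms(2)] .
  hence "0 = smul A (-1) x + x" using vs_smul0[OF assms] vs_simps(7)[OF assms(1) assms(2)] by simp
  thus ?thesis by (simp add: eq_neg_iff_add_eq_0)
qed

lemma vs_uminus: "vspace A \<Longrightarrow> x \<in> carr A \<Longrightarrow> - x \<in> carr A"
  by (metis vs_neg vs_simps(3))

lemma vs_diff: "vspace A \<Longrightarrow> x \<in> carr A \<Longrightarrow> y \<in> carr A \<Longrightarrow> x - y \<in> carr A"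
  by (metis diff_conv_add_uminus vs_simps(2) vs_uminus)

lemma vs_smul_zero:
  assumes "vspace A" shows "smul A c 0 = 0"
proof -
  have "smul A c (0+0) = smul A c 0 + smul A c 0" using vs_simps(4)[OF assms vs_simps(1)[OF assms] vs_simps(1)[OF assms]] .
  thus ?thesis by simp
qed

lemma vs_smul_diff:
  assumes "vspace A" "x \<in> carr A" "y \<in> carr A"
  shows "smul A c (x - y) = smul A c x - smul A c y"
proof -
  have "smul A c (x - y + y) = smul A c (x - y) + smul A c y"
    using vs_simps(4)[OF assms(1) vs_diff[OF assms] assms(3)] .
  thus ?thesis by (simp add: algebra_simps)
qed

lemma lin_simps:
  assumes "lin_map A B f"
  shows "\<And>x. x\<in>carr A \<Longrightarrow> f x \<in> carr B" "\<And>x y. x\<in>carr A \<Longrightarrow> y\<in>carr A \<Longrightarrow> f (x + y) = f x + f y"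
    "\<And>c x. x\<in>carr A \<Longrightarrow> f (smul A c x) = smul B c (f x)"
  using assms unfolding lin_map_def by auto

lemma lin_zero: assumes "lin_map A B f" "vspace A" shows "f 0 = 0"
proof -
  have "f (0+0) = f 0 + f 0" using lin_simps(2)[OF assms(1) vs_simps(1)[OF assms(2)] vs_simps(1)[OF assms(2)]] .
  thus ?thesis by simp
qed

lemma lin_diff: assumes "lin_map A B f" "vspace A" "x \<in> carr A" "y \<in> carr A"
  shows "f (x - y) = f x - f y"
proof -
  have "f (x - y + y) = f (x - y) + f y" using lin_simps(2)[OF assms(1) vs_diff[OF assms(2-4)] assms(4)] .
  thus ?thesis by (simp add: algebra_simps)
qed

lemma hl_simps:
  assumes "hom_leibniz n A"
  shows "vspace A" "lin_map A A (tw A)" "\<And>xs. ntuple n A xs \<Longrightarrow> brk A xs \<in> carr A"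
   "\<And>xs i x y. ntuple n A xs \<Longrightarrow> i < n \<Longrightarrow> x \<in> carr A \<Longrightarrow> y \<in> carr A \<Longrightarrow>
        brk A (xs[i := x + y]) = brk A (xs[i := x]) + brk A (xs[i := y])"
   "\<And>xs i c x. ntuple n A xs \<Longrightarrow> i < n \<Longrightarrow> x \<in> carr A \<Longrightarrow>
        brk A (xs[i := smul A c x]) = smul A c (brk A (xs[i := x]))"
   "\<And>xs. ntuple n A xs \<Longrightarrow> tw A (brk A xs) = brk A (map (tw A) xs)"
   "\<And>xs ys. ntuple n A xs \<Longrightarrow> ntuple (n - 1) A ys \<Longrightarrow>
        brk A (brk A xs # map (tw A) ys) =
          (\<Sum>i<n. brk A ((map (tw A) xs)[i := brk A (xs ! i # ys)]))"
  using assms unfolding hom_leibniz_def by auto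

lemma ntuple_upd: "ntuple n A xs \<Longrightarrow> x \<in> carr A \<Longrightarrow> ntuple n A (xs[i := x])"
  unfolding ntuple_def by (auto dest: set_update_subset_insert[THEN subsetD])

lemma brk_zero:
  assumes "hom_leibniz n A" "ntuple n A xs" "i < n"
  shows "brk A (xs[i := 0]) = 0"
proof -
  have v: "vspace A" using hl_simps(1)[OF assms(1)] .
  have "brk A (xs[i := 0+0]) = brk A (xs[i := 0]) + brk A (xs[i := 0])"
    using hl_simps(4)[OF assms(1) assms(2) assms(3) vs_simps(1)[OF v] vs_simps(1)[OF v]] .
  thus ?thesis by simp
qed

lemma brk_zero':
  assumes "hom_leibniz n A" "ntuple n A xs" "i < n" "xs ! i = 0"
  shows "brk A xs = 0"
  using brk_zero[OF assms(1-3)] assms(4) by (metis list_update_id)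

lemma brk_center:
  assumes "ntuple n A xs" "i < n" "xs ! i \<in> center n A"
  shows "brk A xs = 0"
proof -
  have "brk A (xs[i := xs ! i]) = 0" using assms unfolding center_def by blast
  thus ?thesis by simp
qed

lemma ntuple_nth: "ntuple n A xs \<Longrightarrow> i < n \<Longrightarrow> xs ! i \<in> carr A"
  unfolding ntuple_def by auto

lemma hom_simps:
  assumes "hom n A B f"
  shows "lin_map A B f" "\<And>xs. ntuple n A xs \<Longrightarrow> f (brk A xs) = brk B (map f xs)"
    "\<And>x. x\<in>carr A \<Longrightarrow> f (tw A x) = tw B (f x)"
  using assms unfolding hom_def by auto

lemma ntuple_map: "ntuple n A xs \<Longrightarrow> (\<And>x. x \<in> carr A \<Longrightarrow> f x \<in> carr B) \<Longrightarrow> ntuple n B (map f xs)"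
  unfolding ntuple_def by auto

lemma hom_comp:
  assumes "hom n A B f" "hom n B C g"
  shows "hom n A C (g \<circ> f)"
proof -
  have lf: "lin_map A B f" and lg: "lin_map B C g" using assms hom_simps(1) by auto
  have l: "lin_map A C (g \<circ> f)" using lf lg unfolding lin_map_def by auto
  have b: "(g \<circ> f) (brk A xs) = brk C (map (g \<circ> f) xs)" if "ntuple n A xs" for xs
  proof -
    have "ntuple n B (map f xs)" using ntuple_map[OF that lin_simps(1)[OF lf]] .
    thus ?thesis using that hom_simps(2)[OF assms(1)] hom_simps(2)[OF assms(2)] by simp
  qed
  have t: "(g \<circ> f) (tw A x) = tw C ((g \<circ> f) x)" if "x \<in> carr A" for x
    using that hom_simps(3)[OF assms(1)] hom_simps(3)[OF assms(2)] lin_simps(1)[OF lf] by simp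
  show ?thesis unfolding hom_def using l b t by auto
qed



inductive_set Dsp :: "nat \<Rightarrow> ('k::field,'a::ab_group_add) hlnalg \<Rightarrow> 'a set" for n A where
  D0: "0 \<in> Dsp n A"
| Dbr: "ntuple n A xs \<Longrightarrow> brk A xs \<in> Dsp n A"
| Dadd: "x \<in> Dsp n A \<Longrightarrow> y \<in> Dsp n A \<Longrightarrow> x + y \<in> Dsp n A"
| Dsm: "x \<in> Dsp n A \<Longrightarrow> smul A c x \<in> Dsp n A"

lemma Dsp_carr: assumes "hom_leibniz n A" shows "x \<in> Dsp n A \<Longrightarrow> x \<in> carr A"
  by (induction rule: Dsp.induct)
     (use hl_simps(1,3)[OF assms] vs_simps in auto)

lemma key:
  assumes hl: "hom_leibniz n A" and n2: "n \<ge> 2" and G: "G \<subseteq> carr A"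
  and cen: "\<And>zs j. ntuple n A zs \<Longrightarrow> j < n \<Longrightarrow> zs!j \<in> G \<Longrightarrow> brk A zs \<in> center n A"
  and xs: "ntuple n A xs" "i < n" "\<forall>j<n. j\<noteq>i \<longrightarrow> xs!j \<in> tw A ` G" and zs: "ntuple n A zs"
  shows "brk A (xs[i := brk A zs]) = 0"
proof -
  define g where "g y = (SOME g. g \<in> G \<and> y = tw A g)" for y
  have gj: "g (xs!j) \<in> G \<and> xs!j = tw A (g (xs!j))" if "j < n" "j \<noteq> i" for j
  proof -
    have "\<exists>g. g \<in> G \<and> xs!j = tw A g" using xs(3) that by blast
    thus ?thesis unfolding g_def by (rule someI_ex)
  qed
  have lx: "length xs = n" and lz: "length zs = n" using xs zs unfolding ntuple_def by auto
  define zr where "zr = tl zs"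
  have zsplit: "zs = hd zs # zr" using lz n2 unfolding zr_def by (cases zs) auto
  have hdz: "hd zs \<in> carr A" using zs n2 zsplit unfolding ntuple_def by (metis list.set_intros(1) subsetD)
  have zr: "ntuple (n - 1) A zr" using zs lz zsplit unfolding ntuple_def by (metis diff_Suc_1 length_Cons set_subset_Cons subset_trans)
  define ws where "ws = (map g xs)[i := hd zs]"
  have lw: "length ws = n" using lx unfolding ws_def by simp
  have wsi: "ws ! i = hd zs" using lx xs(2) unfolding ws_def by simp
  have wsj: "ws ! j = g (xs!j)" if "j < n" "j \<noteq> i" for j using that lx unfolding ws_def by simp
  have wsc: "ws ! j \<in> carr A" if "j < n" for j
    using that wsi wsj gj G hdz by (cases "j = i") auto
  have wsn: "ntuple n A ws" unfolding ntuple_def using lw wsc by (auto simp: in_set_conv_nth)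
  define j0 where "j0 = (if i = 0 then 1 else (0::nat))"
  have j0: "j0 < n" "j0 \<noteq> i" using n2 unfolding j0_def by auto
  have bws: "brk A ws \<in> center n A" using cen[OF wsn j0(1)] wsj[OF j0] gj[OF j0] by simp
  have twc: "tw A x \<in> carr A" if "x \<in> carr A" for x
    using lin_simps(1)[OF hl_simps(2)[OF hl]] that .
  have n1: "ntuple n A (brk A ws # map (tw A) zr)"
    using zr hl_simps(3)[OF hl wsn] twc n2 unfolding ntuple_def by auto
  have lhs: "brk A (brk A ws # map (tw A) zr) = 0"
    using brk_center[OF n1, of 0] n2 bws by simp
  have mtw: "ntuple n A (map (tw A) ws)" using ntuple_map[OF wsn twc] .
  have term0: "brk A ((map (tw A) ws)[j := brk A (ws!j # zr)]) = 0" if "j < n" "j \<noteq> i" for j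
  proof -
    have nj: "ntuple n A (ws!j # zr)" using zr wsc[OF that(1)] n2 unfolding ntuple_def by auto
    have c: "brk A (ws!j # zr) \<in> center n A" using cen[OF nj, of 0] n2 wsj[OF that] gj[OF that] by simp
    have "ntuple n A ((map (tw A) ws)[j := brk A (ws!j # zr)])"
      using ntuple_upd[OF mtw hl_simps(3)[OF hl nj]] .
    moreover have "((map (tw A) ws)[j := brk A (ws!j # zr)]) ! j \<in> center n A" using c lw that by simp
    ultimately show ?thesis using brk_center that(1) by blast
  qed
  have eqi: "(map (tw A) ws)[i := brk A (ws!i # zr)] = xs[i := brk A zs]"
  proof (rule nth_equalityI)
    show "length ((map (tw A) ws)[i := brk A (ws!i # zr)]) = length (xs[i := brk A zs])" using lw lx by simp
    fix k assume "k < length ((map (tw A) ws)[i := brk A (ws!i # zr)])"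
    hence k: "k < n" using lw by simp
    show "(map (tw A) ws)[i := brk A (ws!i # zr)] ! k = xs[i := brk A zs] ! k"
    proof (cases "k = i")
      case True thus ?thesis using lw lx k wsi zsplit by simp
    next
      case False thus ?thesis using lw lx k wsj[OF k False] gj[OF k False] by simp
    qed
  qed
  have "brk A (brk A ws # map (tw A) zr) = (\<Sum>j<n. brk A ((map (tw A) ws)[j := brk A (ws ! j # zr)]))"
    using hl_simps(7)[OF hl wsn zr] .
  also have "\<dots> = (\<Sum>j\<in>{i}. brk A ((map (tw A) ws)[j := brk A (ws ! j # zr)]))"
    by (rule sum.mono_neutral_right) (use xs(2) term0 in auto)
  also have "\<dots> = brk A (xs[i := brk A zs])" using eqi by simp
  finally show ?thesis using lhs by simp
qed

lemma alpha_D: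
  assumes hl: "hom_leibniz n A" and n2: "n \<ge> 2" and G: "G \<subseteq> carr A"
  and cen: "\<And>zs j. ntuple n A zs \<Longrightarrow> j < n \<Longrightarrow> zs!j \<in> G \<Longrightarrow> brk A zs \<in> center n A"
  shows "x \<in> Dsp n A \<Longrightarrow> ntuple n A xs \<Longrightarrow> i < n \<Longrightarrow> \<forall>j<n. j\<noteq>i \<longrightarrow> xs!j \<in> tw A ` G
    \<Longrightarrow> brk A (xs[i := x]) = 0"
proof (induction arbitrary: xs rule: Dsp.induct)
  case D0 thus ?case using brk_zero[OF hl] by blast
next
  case (Dbr zs) show ?case
    apply (rule key[OF hl n2 G])
    apply (erule (2) cen)
    using Dbr by auto
next
  case (Dadd x y) thus ?case using hl_simps(4)[OF hl] Dsp_carr[OF hl] by simp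
next
  case (Dsm x c) thus ?case using hl_simps(5)[OF hl] Dsp_carr[OF hl] vs_smul_zero[OF hl_simps(1)[OF hl]] by simp
qed



definition prod_alg :: "('k::field,'a::ab_group_add) hlnalg \<Rightarrow> ('k,'b::ab_group_add) hlnalg \<Rightarrow> ('a\<times>'b) set \<Rightarrow> ('k,'a\<times>'b) hlnalg" where
  "prod_alg A B S = \<lparr>carr = S, smul = \<lambda>c x. (smul A c (fst x), smul B c (snd x)),
     brk = \<lambda>xs. (brk A (map fst xs), brk B (map snd xs)), tw = \<lambda>x. (tw A (fst x), tw B (snd x))\<rparr>"

lemma prod_alg_simps[simp]: "carr (prod_alg A B S) = S" "smul (prod_alg A B S) c x = (smul A c (fst x), smul B c (snd x))"
  "brk (prod_alg A B S) xs = (brk A (map fst xs), brk B (map snd xs))" "tw (prod_alg A B S) x = (tw A (fst x), tw B (snd x))"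
  unfolding prod_alg_def by auto

lemma ntuple_fst: "ntuple n (prod_alg A B S) xs \<Longrightarrow> S \<subseteq> carr A \<times> carr B \<Longrightarrow> ntuple n A (map fst xs)"
  unfolding ntuple_def by auto
lemma ntuple_snd: "ntuple n (prod_alg A B S) xs \<Longrightarrow> S \<subseteq> carr A \<times> carr B \<Longrightarrow> ntuple n B (map snd xs)"
  unfolding ntuple_def by auto

lemma prod_hl:
  assumes hA: "hom_leibniz n A" and hB: "hom_leibniz n B" and S: "S \<subseteq> carr A \<times> carr B"
   and c0: "(0,0) \<in> S" and cadd: "\<And>x y. x \<in> S \<Longrightarrow> y \<in> S \<Longrightarrow> x + y \<in> S"
   and csm: "\<And>c x. x \<in> S \<Longrightarrow> (smul A c (fst x), smul B c (snd x)) \<in> S"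
   and cbr: "\<And>xs. length xs = n \<Longrightarrow> set xs \<subseteq> S \<Longrightarrow> (brk A (map fst xs), brk B (map snd xs)) \<in> S"
   and ctw: "\<And>x. x \<in> S \<Longrightarrow> (tw A (fst x), tw B (snd x)) \<in> S"
  shows "hom_leibniz n (prod_alg A B S)"
proof -
  let ?Q = "prod_alg A B S"
  have vA: "vspace A" and vB: "vspace B" using hA hB hl_simps(1) by auto
  have fS: "fst x \<in> carr A" "snd x \<in> carr B" if "x \<in> S" for x using S that by auto
  have v: "vspace ?Q" unfolding vspace_def
    using c0 cadd csm fS vs_simps[OF vA] vs_simps[OF vB] by (auto simp: zero_prod_def)
  have l: "lin_map ?Q ?Q (tw ?Q)" unfolding lin_map_def
    using ctw fS lin_simps[OF hl_simps(2)[OF hA]] lin_simps[OF hl_simps(2)[OF hB]] by auto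
  have b1: "brk ?Q xs \<in> carr ?Q" if "ntuple n ?Q xs" for xs using cbr that unfolding ntuple_def by auto
  have b2: "brk ?Q (xs[i := x + y]) = brk ?Q (xs[i := x]) + brk ?Q (xs[i := y])"
    if "ntuple n ?Q xs" "i < n" "x \<in> carr ?Q" "y \<in> carr ?Q" for xs i x y
    using hl_simps(4)[OF hA ntuple_fst[OF that(1) S] that(2)] hl_simps(4)[OF hB ntuple_snd[OF that(1) S] that(2)]
      that(3,4) fS by (simp add: map_update)
  have b3: "brk ?Q (xs[i := smul ?Q c x]) = smul ?Q c (brk ?Q (xs[i := x]))"
    if "ntuple n ?Q xs" "i < n" "x \<in> carr ?Q" for xs i c x
    using hl_simps(5)[OF hA ntuple_fst[OF that(1) S] that(2)] hl_simps(5)[OF hB ntuple_snd[OF that(1) S] that(2)]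
      that(3) fS by (simp add: map_update)
  have b4: "tw ?Q (brk ?Q xs) = brk ?Q (map (tw ?Q) xs)" if "ntuple n ?Q xs" for xs
    using hl_simps(6)[OF hA ntuple_fst[OF that S]] hl_simps(6)[OF hB ntuple_snd[OF that S]]
    by (simp add: o_def)
  have b5: "brk ?Q (brk ?Q xs # map (tw ?Q) ys) =
          (\<Sum>i<n. brk ?Q ((map (tw ?Q) xs)[i := brk ?Q (xs ! i # ys)]))"
    if "ntuple n ?Q xs" "ntuple (n - 1) ?Q ys" for xs ys
  proof -
    have ln: "length xs = n" using that unfolding ntuple_def by auto
    have e1: "brk A (brk A (map fst xs) # map (tw A) (map fst ys)) = (\<Sum>i<n. brk A ((map (tw A) (map fst xs))[i := brk A ((map fst xs) ! i # map fst ys)]))"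
      using hl_simps(7)[OF hA ntuple_fst[OF that(1) S] ntuple_fst[OF that(2) S]] .
    have e2: "brk B (brk B (map snd xs) # map (tw B) (map snd ys)) = (\<Sum>i<n. brk B ((map (tw B) (map snd xs))[i := brk B ((map snd xs) ! i # map snd ys)]))"
      using hl_simps(7)[OF hB ntuple_snd[OF that(1) S] ntuple_snd[OF that(2) S]] .
    show ?thesis
    proof (rule prod_eqI)
      show "fst (brk ?Q (brk ?Q xs # map (tw ?Q) ys)) = fst (\<Sum>i<n. brk ?Q ((map (tw ?Q) xs)[i := brk ?Q (xs ! i # ys)]))"
        using e1 ln by (simp add: fst_sum map_update o_def)
      show "snd (brk ?Q (brk ?Q xs # map (tw ?Q) ys)) = snd (\<Sum>i<n. brk ?Q ((map (tw ?Q) xs)[i := brk ?Q (xs ! i # ys)]))"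
        using e2 ln by (simp add: snd_sum map_update o_def)
    qed
  qed
  show ?thesis unfolding hom_leibniz_def using v l b1 b2 b3 b4 b5 by blast
qed

lemma hom_snd: assumes "S \<subseteq> carr A \<times> carr B" shows "hom n (prod_alg A B S) B snd"
  unfolding hom_def lin_map_def using assms by auto
lemma hom_fst: assumes "S \<subseteq> carr A \<times> carr B" shows "hom n (prod_alg A B S) A fst"
  unfolding hom_def lin_map_def using assms by auto

lemma sub_hl:
  assumes hA: "hom_leibniz n A" and S: "S \<subseteq> carr A"
   and c0: "0 \<in> S" and cadd: "\<And>x y. x \<in> S \<Longrightarrow> y \<in> S \<Longrightarrow> x + y \<in> S"
   and csm: "\<And>c x. x \<in> S \<Longrightarrow> smul A c x \<in> S"
   and cbr: "\<And>xs. length xs = n \<Longrightarrow> set xs \<subseteq> S \<Longrightarrow> brk A xs \<in> S"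
   and ctw: "\<And>x. x \<in> S \<Longrightarrow> tw A x \<in> S"
  shows "hom_leibniz n (A\<lparr>carr := S\<rparr>)"
proof -
  have nt: "ntuple n A xs" if "ntuple n (A\<lparr>carr := S\<rparr>) xs" for xs
    using that S unfolding ntuple_def by auto
  have nt2: "ntuple (n-1) A xs" if "ntuple (n-1) (A\<lparr>carr := S\<rparr>) xs" for xs
    using that S unfolding ntuple_def by auto
  have v: "vspace (A\<lparr>carr := S\<rparr>)" unfolding vspace_def
    using c0 cadd csm S vs_simps[OF hl_simps(1)[OF hA]] by (auto simp: subset_iff)
  have l: "lin_map (A\<lparr>carr := S\<rparr>) (A\<lparr>carr := S\<rparr>) (tw A)" unfolding lin_map_def
    using ctw S lin_simps[OF hl_simps(2)[OF hA]] by (auto simp: subset_iff)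
  show ?thesis unfolding hom_leibniz_def
    using v l hl_simps(4-7)[OF hA] nt nt2 S cbr unfolding ntuple_def
    by (auto simp: subset_iff)
qed



lemma Dsp_tw: assumes hl: "hom_leibniz n A" shows "x \<in> Dsp n A \<Longrightarrow> tw A x \<in> Dsp n A"
proof (induction rule: Dsp.induct)
  case D0 thus ?case using lin_zero[OF hl_simps(2)[OF hl] hl_simps(1)[OF hl]] Dsp.D0 by simp
next
  case (Dbr xs)
  have "ntuple n A (map (tw A) xs)" using ntuple_map[OF Dbr lin_simps(1)[OF hl_simps(2)[OF hl]]] .
  hence "brk A (map (tw A) xs) \<in> Dsp n A" by (rule Dsp.Dbr)
  thus ?case using hl_simps(6)[OF hl Dbr] by simp
next
  case (Dadd x y)
  have "tw A (x + y) = tw A x + tw A y" using lin_simps(2)[OF hl_simps(2)[OF hl] Dsp_carr[OF hl Dadd(1)] Dsp_carr[OF hl Dadd(2)]] .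
  thus ?case using Dsp.Dadd[OF Dadd(3,4)] by simp
next
  case (Dsm x c)
  have "tw A (smul A c x) = smul A c (tw A x)" using lin_simps(3)[OF hl_simps(2)[OF hl] Dsp_carr[OF hl Dsm(1)]] .
  thus ?case using Dsp.Dsm[OF Dsm(2)] by simp
qed

lemma Dsp_diff: assumes hl: "hom_leibniz n A" "x \<in> Dsp n A" "y \<in> Dsp n A" shows "x - y \<in> Dsp n A"
proof -
  have "smul A (-1) y = - y" using vs_neg[OF hl_simps(1)[OF hl(1)] Dsp_carr[OF hl(1) hl(3)]] .
  thus ?thesis using Dsp.Dadd[OF hl(2) Dsp.Dsm[OF hl(3), of "-1"]] by simp
qed

lemma perfect:
  fixes H :: "('k::field,'h::ab_group_add) hlnalg" and Y :: "('k,'y::ab_group_add) hlnalg"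
  assumes hH: "hom_leibniz n H" and hY: "hom_leibniz n Y" and n2: "n \<ge> 2"
    and f: "hom n H Y f" and surj: "f ` carr H = carr Y"
    and U: "\<And>Q::('k,'h\<times>'y) hlnalg. central_ext n Q Y snd \<Longrightarrow> alpha_central_ext n Q Y snd
            \<Longrightarrow> lifts_uniquely n H Q snd f"
  shows "carr H \<subseteq> Dsp n H"
proof -
  let ?D = "Dsp n H"
  have vH: "vspace H" using hl_simps(1)[OF hH] .
  note vs = vs_simps[OF vH]
  have Dc: "x \<in> carr H" if "x \<in> ?D" for x using Dsp_carr[OF hH that] .
  define subsp where "subsp C \<longleftrightarrow> C \<subseteq> carr H \<and> 0 \<in> C \<and> (\<forall>x\<in>C. \<forall>y\<in>C. x+y\<in>C) \<and> (\<forall>c. \<forall>x\<in>C. smul H c x \<in> C)" for C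
  define AA where "AA = {C. subsp C \<and> C \<inter> ?D = {0}}"
  have "{0} \<in> AA" unfolding AA_def subsp_def using vs(1) vs_smul_zero[OF vH] Dsp.D0 by auto
  hence ne: "AA \<noteq> {}" by auto
  have ch: "\<Union>CC \<in> AA" if "CC \<noteq> {}" "subset.chain AA CC" for CC
  proof -
    have CA: "CC \<subseteq> AA" and chn: "\<forall>X\<in>CC. \<forall>Y\<in>CC. X \<subseteq> Y \<or> Y \<subseteq> X"
      using that(2) unfolding subset.chain_def by auto
    have s: "subsp X" "X \<inter> ?D = {0}" if "X \<in> CC" for X using CA that unfolding AA_def by auto
    have "subsp (\<Union>CC)" unfolding subsp_def
    proof (intro conjI ballI allI)
      show "\<Union>CC \<subseteq> carr H" using s(1) unfolding subsp_def by blast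
      show "0 \<in> \<Union>CC" using s(1) that(1) unfolding subsp_def by blast
      fix x y assume "x \<in> \<Union>CC" "y \<in> \<Union>CC"
      then obtain X Y where "X \<in> CC" "Y \<in> CC" "x \<in> X" "y \<in> Y" by auto
      moreover have "X \<subseteq> Y \<or> Y \<subseteq> X" using chn \<open>X \<in> CC\<close> \<open>Y \<in> CC\<close> by blast
      ultimately have "(x \<in> Y \<and> y \<in> Y \<and> Y \<in> CC) \<or> (x \<in> X \<and> y \<in> X \<and> X \<in> CC)" by blast
      then obtain Z where "x \<in> Z" "y \<in> Z" "Z \<in> CC" by blast
      thus "x + y \<in> \<Union>CC" using s(1)[OF \<open>Z \<in> CC\<close>] unfolding subsp_def by blast
    next
      fix c x assume "x \<in> \<Union>CC"
      then obtain X where "X \<in> CC" "x \<in> X" by auto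
      thus "smul H c x \<in> \<Union>CC" using s(1) unfolding subsp_def by blast
    qed
    moreover have "\<Union>CC \<inter> ?D = {0}" using s that(1) by blast
    ultimately show ?thesis unfolding AA_def by simp
  qed
  obtain C where CA: "C \<in> AA" and Cmax: "\<And>X. X \<in> AA \<Longrightarrow> C \<subseteq> X \<Longrightarrow> X = C"
    using subset_Zorn_nonempty[OF ne ch] by blast
  have Cs: "C \<subseteq> carr H" "0 \<in> C" "\<And>x y. x\<in>C \<Longrightarrow> y\<in>C \<Longrightarrow> x+y\<in>C" "\<And>c x. x\<in>C \<Longrightarrow> smul H c x \<in> C"
    and CD: "C \<inter> ?D = {0}" using CA unfolding AA_def subsp_def by auto
  have Cneg: "- x \<in> C" if "x \<in> C" for x using Cs(4)[OF that, of "-1"] vs_neg[OF vH] Cs(1) that by auto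
  have Cdiff: "x - y \<in> C" if "x \<in> C" "y \<in> C" for x y using Cs(3)[OF that(1) Cneg[OF that(2)]] by simp
  have span: "\<exists>c\<in>C. y - c \<in> ?D" if y: "y \<in> carr H" for y
  proof (rule ccontr)
    assume nsp: "\<not> (\<exists>c\<in>C. y - c \<in> ?D)"
    define C' where "C' = {c + smul H t y | c t. c \<in> C}"
    have sub': "subsp C'" unfolding subsp_def
    proof (intro conjI ballI allI)
      show "C' \<subseteq> carr H" unfolding C'_def using Cs(1) vs(2,3) y by auto
      show "0 \<in> C'" unfolding C'_def using Cs(2) vs_smul0[OF vH y] by force
      fix a b assume "a \<in> C'" "b \<in> C'"
      then obtain c1 t1 c2 t2 where "a = c1 + smul H t1 y" "b = c2 + smul H t2 y" "c1 \<in> C" "c2 \<in> C"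
        unfolding C'_def by auto
      moreover have "smul H (t1 + t2) y = smul H t1 y + smul H t2 y" using vs(5)[OF y] .
      ultimately have "a + b = (c1 + c2) + smul H (t1+t2) y" "c1 + c2 \<in> C" using Cs(3) by (auto simp: algebra_simps)
      thus "a + b \<in> C'" unfolding C'_def by blast
    next
      fix s a assume "a \<in> C'"
      then obtain c t where a: "a = c + smul H t y" "c \<in> C" unfolding C'_def by auto
      have "smul H s a = smul H s c + smul H (s * t) y"
        using a vs(4)[OF _ vs(3)[OF y]] vs(6)[OF y] Cs(1) by auto
      thus "smul H s a \<in> C'" unfolding C'_def using Cs(4)[OF a(2)] by blast
    qed
    have int': "C' \<inter> ?D = {0}"
    proof -
      have "z = 0" if zC: "z \<in> C'" and zD: "z \<in> ?D" for z
      proof -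
        obtain c t where z: "z = c + smul H t y" "c \<in> C" using zC unfolding C'_def by auto
        show ?thesis
        proof (cases "t = 0")
          case True thus ?thesis using z zD CD vs_smul0[OF vH y] by auto
        next
          case False
          have cc: "c \<in> carr H" using z Cs(1) by auto
          have "smul H (1/t) z = smul H (1/t) c + smul H (1/t) (smul H t y)"
            using z vs(4)[OF cc vs(3)[OF y]] by simp
          also have "smul H (1/t) (smul H t y) = y" using vs(6)[OF y] vs(7)[OF y] False by simp
          finally have "y - (- smul H (1/t) c) \<in> ?D" using Dsp.Dsm[OF zD, of "1/t"] by (simp add: algebra_simps)
          moreover have "- smul H (1/t) c \<in> C" using Cneg Cs(4) z(2) by blast
          ultimately show ?thesis using nsp by blast
        qed
      qed
      moreover have "0 \<in> C' \<inter> ?D" using sub' Dsp.D0 unfolding subsp_def by auto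
      ultimately show ?thesis by blast
    qed
    have "C \<subseteq> C'" unfolding C'_def using vs_smul0[OF vH y] by force
    hence "C' = C" using Cmax sub' int' unfolding AA_def by blast
    moreover have "y \<in> C'"
    proof -
      have "y = 0 + smul H 1 y" using vs(7)[OF y] by simp
      thus ?thesis unfolding C'_def using Cs(2) by blast
    qed
    ultimately show False using nsp Dsp.D0 by force
  qed
  define p where "p y = (SOME c. c \<in> C \<and> y - c \<in> ?D)" for y
  have pC: "p y \<in> C" "y - p y \<in> ?D" if "y \<in> carr H" for y
    using someI_ex[OF span[OF that, unfolded Bex_def]] unfolding p_def by auto
  have puniq: "p y = c" if "y \<in> carr H" "c \<in> C" "y - c \<in> ?D" for y c
  proof -
    have "c - p y = (y - p y) - (y - c)" by simp
    hence "c - p y \<in> ?D" using Dsp_diff[OF hH pC(2)[OF that(1)] that(3)] by simp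
    moreover have "c - p y \<in> C" using Cdiff that(2) pC(1)[OF that(1)] by auto
    ultimately have "c - p y = 0" using CD by blast
    thus ?thesis by simp
  qed
  have padd: "p (x + y) = p x + p y" if "x \<in> carr H" "y \<in> carr H" for x y
    using puniq[OF vs(2)[OF that] Cs(3)[OF pC(1)[OF that(1)] pC(1)[OF that(2)]]]
      Dsp.Dadd[OF pC(2)[OF that(1)] pC(2)[OF that(2)]] by (simp add: algebra_simps)
  have psm: "p (smul H c x) = smul H c (p x)" if "x \<in> carr H" for x c
  proof -
    have "smul H c x - smul H c (p x) = smul H c (x - p x)"
      using vs_smul_diff[OF vH that] pC(1)[OF that] Cs(1) by auto
    thus ?thesis using puniq[OF vs(3)[OF that] Cs(4)[OF pC(1)[OF that]]] Dsp.Dsm[OF pC(2)[OF that]] by simp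
  qed
  have pD: "p d = 0" if "d \<in> ?D" for d using puniq[OF Dc[OF that] Cs(2)] that by simp
  have p0: "p 0 = 0" using pD Dsp.D0 by blast
  note twl = lin_simps[OF hl_simps(2)[OF hH]]
  define \<gamma> where "\<gamma> c = p (tw H c)" for c
  have ptw: "p (tw H x) = \<gamma> (p x)" if x: "x \<in> carr H" for x
  proof -
    have px: "p x \<in> carr H" using pC(1)[OF x] Cs(1) by auto
    have "tw H x - tw H (p x) = tw H (x - p x)" using lin_diff[OF hl_simps(2)[OF hH] vH x px] by simp
    hence d: "tw H x - tw H (p x) \<in> ?D" using Dsp_tw[OF hH pC(2)[OF x]] by simp
    have "tw H x = tw H (p x) + (tw H x - tw H (p x))" by simp
    hence "p (tw H x) = p (tw H (p x)) + p (tw H x - tw H (p x))"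
      using padd[OF twl(1)[OF px] Dc[OF d]] by simp
    thus ?thesis using pD[OF d] unfolding \<gamma>_def by simp
  qed
  have g0: "\<gamma> 0 = 0" unfolding \<gamma>_def using lin_zero[OF hl_simps(2)[OF hH] vH] p0 by simp
  define A' where "A' = \<lparr>carr = C, smul = smul H, brk = (\<lambda>_. 0::'h), tw = \<gamma>\<rparr>"
  have A'hl: "hom_leibniz n A'"
  proof -
    have v: "vspace A'" unfolding vspace_def A'_def using Cs vs by (auto simp: subset_iff)
    have l: "lin_map A' A' (tw A')" unfolding lin_map_def A'_def
    proof (simp, intro conjI ballI allI)
      fix x assume x: "x \<in> C" thus "\<gamma> x \<in> C" unfolding \<gamma>_def using pC(1) twl(1) Cs(1) by auto
      fix y assume y: "y \<in> C"
      have xc: "x \<in> carr H" "y \<in> carr H" using x y Cs(1) by auto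
      show "\<gamma> (x + y) = \<gamma> x + \<gamma> y" unfolding \<gamma>_def using twl(2)[OF xc] padd[OF twl(1)[OF xc(1)] twl(1)[OF xc(2)]] by simp
    next
      fix c x assume x: "x \<in> C"
      have xc: "x \<in> carr H" using x Cs(1) by auto
      show "\<gamma> (smul H c x) = smul H c (\<gamma> x)" unfolding \<gamma>_def using twl(3)[OF xc] psm[OF twl(1)[OF xc]] by simp
    qed
    show ?thesis unfolding hom_leibniz_def using v l g0 Cs(2) vs_smul_zero[OF vH] by (simp add: A'_def)
  qed
  define S where "S = C \<times> carr Y"
  define Q where "Q = prod_alg A' Y S"
  have vY: "vspace Y" using hl_simps(1)[OF hY] .
  have SS: "S \<subseteq> carr A' \<times> carr Y" unfolding S_def A'_def by simp
  have Qhl: "hom_leibniz n Q" unfolding Q_def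
  proof (rule prod_hl[OF A'hl hY SS])
    show "(0, 0) \<in> S" unfolding S_def using Cs(2) vs_simps(1)[OF vY] by simp
    show "x + y \<in> S" if "x \<in> S" "y \<in> S" for x y using that Cs(3) vs_simps(2)[OF vY] unfolding S_def by auto
    show "(smul A' c (fst x), smul Y c (snd x)) \<in> S" if "x \<in> S" for c x
      using that Cs(4) vs_simps(3)[OF vY] unfolding S_def A'_def by auto
    show "(brk A' (map fst xs), brk Y (map snd xs)) \<in> S" if "length xs = n" "set xs \<subseteq> S" for xs
    proof -
      have "ntuple n Y (map snd xs)" using that unfolding S_def ntuple_def by auto
      thus ?thesis using Cs(2) hl_simps(3)[OF hY] by (simp add: A'_def S_def)
    qed
    show "(tw A' (fst x), tw Y (snd x)) \<in> S" if "x \<in> S" for x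
      using that A'hl[THEN hl_simps(2), THEN lin_simps(1)] lin_simps(1)[OF hl_simps(2)[OF hY]]
      unfolding S_def by (auto simp: A'_def)
  qed
  have Cne: "C \<noteq> {}" using Cs(2) by auto
  have extQ: "ext n Q Y snd" unfolding ext_def Q_def
    using Qhl hY hom_snd[OF SS] Cne unfolding Q_def S_def by auto
  have kerQ: "x \<in> center n Q" if "x \<in> S" "snd x = 0" for x
  proof -
    have "brk Q (xs[i := x]) = 0" if "ntuple n Q xs" "i < n" for xs i
    proof -
      have "ntuple n Y (map snd xs)" using ntuple_snd[OF that(1)[unfolded Q_def] SS] .
      hence "brk Y ((map snd xs)[i := 0]) = 0" using brk_zero[OF hY _ that(2)] by blast
      thus ?thesis using \<open>snd x = 0\<close> by (simp add: Q_def A'_def map_update zero_prod_def)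
    qed
    thus ?thesis unfolding center_def using that by (simp add: Q_def)
  qed
  have centQ: "central_ext n Q Y snd" unfolding central_ext_def kernel_def
    using extQ kerQ by (auto simp: Q_def)
  have alphaQ: "alpha_central_ext n Q Y snd" unfolding alpha_central_ext_def
  proof (intro conjI extQ allI impI)
    fix xs i assume a: "ntuple n Q xs \<and> i < n \<and> (\<forall>j<n. j \<noteq> i \<longrightarrow> xs ! j \<in> tw Q ` kernel Q snd)"
    define j0 where "j0 = (if i = 0 then 1 else (0::nat))"
    have j0: "j0 < n" "j0 \<noteq> i" using n2 unfolding j0_def by auto
    have "snd (xs ! j0) = 0" using a j0 lin_zero[OF hl_simps(2)[OF hY] vY]
      unfolding kernel_def Q_def by auto
    moreover have "ntuple n Y (map snd xs)" using ntuple_snd a SS unfolding Q_def by blast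
    moreover have "length xs = n" using a unfolding ntuple_def by auto
    ultimately have "brk Y (map snd xs) = 0" using brk_zero'[OF hY _ j0(1), of "map snd xs"] j0 by simp
    thus "brk Q xs = 0" unfolding Q_def by (simp add: A'_def zero_prod_def)
  qed
  obtain h where hh: "hom n H Q h" and huniq: "\<And>h'. hom n H Q h' \<Longrightarrow> (\<forall>x\<in>carr H. snd (h' x) = f x) \<Longrightarrow> (\<forall>x\<in>carr H. h' x = h x)"
    using U[OF centQ alphaQ] unfolding lifts_uniquely_def by blast
  note fl = lin_simps[OF hom_simps(1)[OF f]]
  have h1: "hom n H Q (\<lambda>x. (p x, f x))" unfolding hom_def lin_map_def
  proof (intro conjI ballI allI impI)
    show "(p x, f x) \<in> carr Q" if "x \<in> carr H" for x using pC(1) fl(1) that unfolding Q_def S_def by auto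
    show "(p (x + y), f (x + y)) = (p x, f x) + (p y, f y)" if "x \<in> carr H" "y \<in> carr H" for x y
      using padd fl(2) that by auto
    show "(p (smul H c x), f (smul H c x)) = smul Q c (p x, f x)" if "x \<in> carr H" for c x
      using psm fl(3) that unfolding Q_def by (auto simp: A'_def)
    show "(p (brk H xs), f (brk H xs)) = brk Q (map (\<lambda>x. (p x, f x)) xs)" if "ntuple n H xs" for xs
      using pD[OF Dsp.Dbr[OF that]] hom_simps(2)[OF f that] unfolding Q_def by (simp add: A'_def o_def)
    show "(p (tw H x), f (tw H x)) = tw Q (p x, f x)" if "x \<in> carr H" for x
      using ptw hom_simps(3)[OF f] that unfolding Q_def by (simp add: A'_def)
  qed
  have h2: "hom n H Q (\<lambda>x. (0, f x))" unfolding hom_def lin_map_def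
  proof (intro conjI ballI allI impI)
    show "(0, f x) \<in> carr Q" if "x \<in> carr H" for x using Cs(2) fl(1) that unfolding Q_def S_def by auto
    show "(0, f (x + y)) = (0, f x) + (0::'h, f y)" if "x \<in> carr H" "y \<in> carr H" for x y
      using fl(2) that by auto
    show "(0, f (smul H c x)) = smul Q c (0, f x)" if "x \<in> carr H" for c x
      using fl(3) that vs_smul_zero[OF vH] unfolding Q_def by (auto simp: A'_def)
    show "(0, f (brk H xs)) = brk Q (map (\<lambda>x. (0, f x)) xs)" if "ntuple n H xs" for xs
      using hom_simps(2)[OF f that] unfolding Q_def by (simp add: A'_def o_def)
    show "(0, f (tw H x)) = tw Q (0, f x)" if "x \<in> carr H" for x
      using g0 hom_simps(3)[OF f] that unfolding Q_def by (simp add: A'_def)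
  qed
  have "p x = 0" if "x \<in> carr H" for x
  proof -
    have "(p x, f x) = h x" "(0, f x) = h x" using huniq[OF h1] huniq[OF h2] that by auto
    hence "(p x, f x) = (0, f x)" by simp
    thus ?thesis by simp
  qed
  thus ?thesis using pC(2) by fastforce
qed



lemma hom_restr: "hom n A B f \<Longrightarrow> S \<subseteq> carr A \<Longrightarrow> hom n (A\<lparr>carr := S\<rparr>) B f"
  unfolding hom_def lin_map_def ntuple_def by (auto simp: subset_iff)

lemma hom_unrestr: "hom n H (A\<lparr>carr := S\<rparr>) f \<Longrightarrow> S \<subseteq> carr A \<Longrightarrow> hom n H A f"
  unfolding hom_def lin_map_def ntuple_def by auto

lemma hom_restr2: "hom n H A f \<Longrightarrow> (\<And>x. x \<in> carr H \<Longrightarrow> f x \<in> S) \<Longrightarrow> hom n H (A\<lparr>carr := S\<rparr>) f"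
  unfolding hom_def lin_map_def ntuple_def by auto

lemma ext_comp:
  assumes "ext n K L \<pi>" "ext n H K \<tau>" shows "ext n H L (\<pi> \<circ> \<tau>)"
  using assms hom_comp unfolding ext_def by (metis image_comp)

lemma cen_comp:
  assumes cK: "central_ext n K L \<pi>" and cH: "central_ext n H K \<tau>"
    and zs: "ntuple n H zs" "j < n" "zs ! j \<in> carr H" "\<pi> (\<tau> (zs ! j)) = 0"
  shows "brk H zs \<in> center n H"
proof -
  have hK: "hom_leibniz n K" and hH: "hom_leibniz n H" and ht: "hom n H K \<tau>"
    using cK cH unfolding central_ext_def ext_def by auto
  have tz: "\<tau> (zs ! j) \<in> carr K" using lin_simps(1)[OF hom_simps(1)[OF ht] zs(3)] .
  have c: "\<tau> (zs ! j) \<in> center n K" using cK tz zs(4) unfolding central_ext_def kernel_def by auto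
  have nt: "ntuple n K (map \<tau> zs)" using ntuple_map[OF zs(1) lin_simps(1)[OF hom_simps(1)[OF ht]]] .
  have "\<tau> (brk H zs) = brk K (map \<tau> zs)" using hom_simps(2)[OF ht zs(1)] .
  also have "\<dots> = 0" using brk_center[OF nt, of j] zs(1,2) c unfolding ntuple_def by simp
  finally have "brk H zs \<in> kernel H \<tau>" unfolding kernel_def using hl_simps(3)[OF hH zs(1)] by simp
  thus ?thesis using cH unfolding central_ext_def by auto
qed

lemma perturb:
  assumes hA: "hom_leibniz n A" and xs: "ntuple n A xs" and ys: "ntuple n A ys"
    and d: "\<And>j. j < n \<Longrightarrow> ys ! j - xs ! j \<in> center n A"
  shows "brk A ys = brk A xs"
proof -
  have lx: "length xs = n" and ly: "length ys = n" using xs ys unfolding ntuple_def by auto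
  define z where "z k = map (\<lambda>j. if j < k then ys ! j else xs ! j) [0..<n]" for k
  have zn: "ntuple n A (z k)" for k
    unfolding z_def ntuple_def using ntuple_nth[OF xs] ntuple_nth[OF ys] by auto
  have "brk A (z k) = brk A xs" if "k \<le> n" for k
    using that
  proof (induction k)
    case 0
    have "z 0 = xs" unfolding z_def using lx map_nth[of xs] by simp
    thus ?case by simp
  next
    case (Suc k)
    hence k: "k < n" by simp
    have e1: "z (Suc k) = (z k)[k := xs ! k + (ys ! k - xs ! k)]"
      by (rule nth_equalityI) (auto simp: z_def nth_list_update less_Suc_eq)
    have e2: "z k = (z k)[k := xs ! k]"
      by (rule nth_equalityI) (auto simp: z_def nth_list_update)
    have "brk A (z (Suc k)) = brk A ((z k)[k := xs ! k]) + brk A ((z k)[k := ys ! k - xs ! k])"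
      unfolding e1 using hl_simps(4)[OF hA zn k ntuple_nth[OF xs k] vs_diff[OF hl_simps(1)[OF hA] ntuple_nth[OF ys k] ntuple_nth[OF xs k]]] .
    also have "brk A ((z k)[k := ys ! k - xs ! k]) = 0" using d[OF k] zn k unfolding center_def by blast
    finally show ?case using e2 Suc by simp
  qed
  moreover have "z n = ys" unfolding z_def using ly by (intro nth_equalityI) auto
  ultimately show ?thesis by (metis order_refl)
qed

lemma lift_D:
  assumes hH: "hom_leibniz n H" and hP: "hom_leibniz n P" and t: "hom n H K \<tau>" and s: "hom n P K \<sigma>"
    and surj: "\<sigma> ` carr P = carr K"
  shows "d \<in> Dsp n H \<Longrightarrow> \<exists>q\<in>Dsp n P. \<sigma> q = \<tau> d"
proof (induction rule: Dsp.induct)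
  case D0 show ?case
    using Dsp.D0 lin_zero[OF hom_simps(1)[OF t] hl_simps(1)[OF hH]] lin_zero[OF hom_simps(1)[OF s] hl_simps(1)[OF hP]] by metis
next
  case (Dbr xs)
  define g where "g x = (SOME p. p \<in> carr P \<and> \<sigma> p = \<tau> x)" for x
  have gx: "g x \<in> carr P \<and> \<sigma> (g x) = \<tau> x" if "x \<in> carr H" for x
  proof -
    have "\<tau> x \<in> carr K" using lin_simps(1)[OF hom_simps(1)[OF t] that] .
    hence "\<exists>p. p \<in> carr P \<and> \<sigma> p = \<tau> x" using surj by force
    thus ?thesis unfolding g_def by (rule someI_ex)
  qed
  have np: "ntuple n P (map g xs)" using ntuple_map[OF Dbr] gx by blast
  have m: "map \<sigma> (map g xs) = map \<tau> xs" using gx Dbr unfolding ntuple_def by auto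
  have "\<sigma> (brk P (map g xs)) = brk K (map \<sigma> (map g xs))" using hom_simps(2)[OF s np] .
  also have "\<dots> = brk K (map \<tau> xs)" by (simp only: m)
  also have "\<dots> = \<tau> (brk H xs)" using hom_simps(2)[OF t Dbr] by simp
  finally have "\<sigma> (brk P (map g xs)) = \<tau> (brk H xs)" .
  thus ?case using Dsp.Dbr[OF np] by blast
next
  case (Dadd x y)
  then obtain q1 q2 where q: "q1 \<in> Dsp n P" "\<sigma> q1 = \<tau> x" "q2 \<in> Dsp n P" "\<sigma> q2 = \<tau> y" by blast
  have "\<sigma> (q1 + q2) = \<tau> (x + y)"
    using lin_simps(2)[OF hom_simps(1)[OF s] Dsp_carr[OF hP q(1)] Dsp_carr[OF hP q(3)]]
      lin_simps(2)[OF hom_simps(1)[OF t] Dsp_carr[OF hH Dadd(1)] Dsp_carr[OF hH Dadd(2)]] q by simp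
  thus ?case using Dsp.Dadd[OF q(1,3)] by blast
next
  case (Dsm x c)
  then obtain q where q: "q \<in> Dsp n P" "\<sigma> q = \<tau> x" by blast
  have "\<sigma> (smul P c q) = \<tau> (smul H c x)"
    using lin_simps(3)[OF hom_simps(1)[OF s] Dsp_carr[OF hP q(1)]]
      lin_simps(3)[OF hom_simps(1)[OF t] Dsp_carr[OF hH Dsm(1)]] q by simp
  thus ?case using Dsp.Dsm[OF q(1)] by blast
qed



lemma partb:
  fixes L :: "('k::field,'l::ab_group_add) hlnalg" and K :: "('k,'m::ab_group_add) hlnalg"
    and H :: "('k,'h::ab_group_add) hlnalg"
    and \<pi> :: "'m \<Rightarrow> 'l" and \<tau> :: "'h \<Rightarrow> 'm"
  assumes n2: "n \<ge> 2" and cK: "central_ext n K L \<pi>" and cH: "central_ext n H K \<tau>"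
    and UQ: "universal_central_ext n TYPE('q::ab_group_add \<times> 'm) H K \<tau>"
    and UH: "universal_central_ext n TYPE('h \<times> 'm) H K \<tau>"
  shows "alpha_central_ext n H L (\<pi> \<circ> \<tau>) \<and>
     (\<forall>(P :: ('k, 'q) hlnalg) \<omega>. central_ext n P L \<omega> \<longrightarrow> lifts_uniquely n H P \<omega> (\<pi> \<circ> \<tau>))"
proof -
  have hK: "hom_leibniz n K" and hL: "hom_leibniz n L" and hp: "hom n K L \<pi>" and sp: "\<pi> ` carr K = carr L"
    using cK unfolding central_ext_def ext_def by auto
  have hH: "hom_leibniz n H" and ht: "hom n H K \<tau>" and st: "\<tau> ` carr H = carr K"
    using cH unfolding central_ext_def ext_def by auto
  have eHL: "ext n H L (\<pi> \<circ> \<tau>)" using ext_comp cK cH unfolding central_ext_def by blast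
  have perf: "carr H \<subseteq> Dsp n H"
  proof (rule perfect[OF hH hK n2 ht st])
    fix Q :: "('k, 'h \<times> 'm) hlnalg" assume "central_ext n Q K snd"
    thus "lifts_uniquely n H Q snd \<tau>" using UH unfolding universal_central_ext_def by blast
  qed
  let ?G = "kernel H (\<pi> \<circ> \<tau>)"
  have G: "?G \<subseteq> carr H" unfolding kernel_def by auto
  have cen: "brk H zs \<in> center n H" if "ntuple n H zs" "j < n" "zs ! j \<in> ?G" for zs j
    using cen_comp[OF cK cH that(1,2)] that(3) unfolding kernel_def by auto
  have alpha: "alpha_central_ext n H L (\<pi> \<circ> \<tau>)" unfolding alpha_central_ext_def
  proof (intro conjI eHL allI impI)
    fix xs i assume a: "ntuple n H xs \<and> i < n \<and> (\<forall>j<n. j \<noteq> i \<longrightarrow> xs ! j \<in> tw H ` ?G)"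
    have "xs ! i \<in> Dsp n H" using perf ntuple_nth a by blast
    have aD: "\<And>x xs i. x \<in> Dsp n H \<Longrightarrow> ntuple n H xs \<Longrightarrow> i < n \<Longrightarrow> \<forall>j<n. j \<noteq> i \<longrightarrow> xs ! j \<in> tw H ` ?G \<Longrightarrow> brk H (xs[i := x]) = 0"
      by (rule alpha_D[OF hH n2 G], erule (2) cen, assumption+)
    hence "brk H (xs[i := xs ! i]) = 0" using aD a \<open>xs ! i \<in> Dsp n H\<close> by blast
    thus "brk H xs = 0" by simp
  qed
  have lifts: "lifts_uniquely n H P \<omega> (\<pi> \<circ> \<tau>)" if cP: "central_ext n P L \<omega>" for P :: "('k, 'q) hlnalg" and \<omega>
  proof -
    have hP: "hom_leibniz n P" and ho: "hom n P L \<omega>" and so: "\<omega> ` carr P = carr L"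
      using cP unfolding central_ext_def ext_def by auto
    note lo = lin_simps[OF hom_simps(1)[OF ho]] and lp = lin_simps[OF hom_simps(1)[OF hp]]
    define S where "S = {x. fst x \<in> carr P \<and> snd x \<in> carr K \<and> \<omega> (fst x) = \<pi> (snd x)}"
    define Q where "Q = prod_alg P K S"
    have SS: "S \<subseteq> carr P \<times> carr K" unfolding S_def by auto
    have Qhl: "hom_leibniz n Q" unfolding Q_def
    proof (rule prod_hl[OF hP hK SS])
      show "(0, 0) \<in> S" unfolding S_def
        using vs_simps(1)[OF hl_simps(1)[OF hP]] vs_simps(1)[OF hl_simps(1)[OF hK]]
          lin_zero[OF hom_simps(1)[OF ho] hl_simps(1)[OF hP]] lin_zero[OF hom_simps(1)[OF hp] hl_simps(1)[OF hK]] by simp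
      show "x + y \<in> S" if "x \<in> S" "y \<in> S" for x y
        using that vs_simps(2)[OF hl_simps(1)[OF hP]] vs_simps(2)[OF hl_simps(1)[OF hK]] lo(2) lp(2)
        unfolding S_def by auto
      show "(smul P c (fst x), smul K c (snd x)) \<in> S" if "x \<in> S" for c x
        using that vs_simps(3)[OF hl_simps(1)[OF hP]] vs_simps(3)[OF hl_simps(1)[OF hK]] lo(3) lp(3)
        unfolding S_def by auto
      show "(brk P (map fst xs), brk K (map snd xs)) \<in> S" if "length xs = n" "set xs \<subseteq> S" for xs
      proof -
        have n1: "ntuple n P (map fst xs)" "ntuple n K (map snd xs)" using that unfolding ntuple_def S_def by auto
        have m: "map \<omega> (map fst xs) = map \<pi> (map snd xs)" using that(2) unfolding S_def by auto
        have "\<omega> (brk P (map fst xs)) = brk L (map \<omega> (map fst xs))" using hom_simps(2)[OF ho n1(1)] .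
        also have "\<dots> = brk L (map \<pi> (map snd xs))" by (simp only: m)
        also have "\<dots> = \<pi> (brk K (map snd xs))" using hom_simps(2)[OF hp n1(2)] by simp
        finally have "\<omega> (brk P (map fst xs)) = \<pi> (brk K (map snd xs))" .
        thus ?thesis unfolding S_def using hl_simps(3)[OF hP n1(1)] hl_simps(3)[OF hK n1(2)] by simp
      qed
      show "(tw P (fst x), tw K (snd x)) \<in> S" if "x \<in> S" for x
        using that lin_simps(1)[OF hl_simps(2)[OF hP]] lin_simps(1)[OF hl_simps(2)[OF hK]]
          hom_simps(3)[OF ho] hom_simps(3)[OF hp] unfolding S_def by auto
    qed
    have surjQ: "snd ` S = carr K"
    proof
      show "snd ` S \<subseteq> carr K" unfolding S_def by auto
      show "carr K \<subseteq> snd ` S"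
      proof
        fix k assume k: "k \<in> carr K"
        then obtain p where "p \<in> carr P" "\<omega> p = \<pi> k" using so lp(1) by (metis imageE)
        hence "(p, k) \<in> S" using k unfolding S_def by auto
        thus "k \<in> snd ` S" by force
      qed
    qed
    have kerQ: "x \<in> center n Q" if x: "x \<in> S" "snd x = 0" for x
    proof -
      have "\<omega> (fst x) = 0" using x lin_zero[OF hom_simps(1)[OF hp] hl_simps(1)[OF hK]] unfolding S_def by auto
      hence fc: "fst x \<in> center n P" using cP x unfolding central_ext_def kernel_def S_def by auto
      have "brk Q (xs[i := x]) = 0" if "ntuple n Q xs" "i < n" for xs i
      proof -
        have n1: "ntuple n P (map fst xs)" "ntuple n K (map snd xs)"
          using ntuple_fst[OF that(1)[unfolded Q_def] SS] ntuple_snd[OF that(1)[unfolded Q_def] SS] by auto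
        have "brk K ((map snd xs)[i := 0]) = 0" using brk_zero[OF hK n1(2) that(2)] .
        moreover have "brk P ((map fst xs)[i := fst x]) = 0" using fc n1(1) that(2) unfolding center_def by blast
        ultimately show ?thesis using x(2) by (simp add: Q_def map_update zero_prod_def)
      qed
      thus ?thesis unfolding center_def using x by (simp add: Q_def)
    qed
    have cQ: "central_ext n Q K snd" unfolding central_ext_def ext_def kernel_def
      using Qhl hK hom_snd[OF SS] surjQ kerQ by (auto simp: Q_def)
    obtain \<Psi> where hPsi: "hom n H Q \<Psi>" and sPsi: "\<forall>x\<in>carr H. snd (\<Psi> x) = \<tau> x"
      and uPsi: "\<And>h'. hom n H Q h' \<Longrightarrow> (\<forall>x\<in>carr H. snd (h' x) = \<tau> x) \<Longrightarrow> (\<forall>x\<in>carr H. h' x = \<Psi> x)"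
      using UQ cQ unfolding universal_central_ext_def lifts_uniquely_def by blast
    have PsiS: "\<Psi> x \<in> S" if "x \<in> carr H" for x
      using lin_simps(1)[OF hom_simps(1)[OF hPsi] that] by (simp add: Q_def)
    have hPhi: "hom n H P (fst \<circ> \<Psi>)" using hom_comp[OF hPsi[unfolded Q_def] hom_fst[OF SS]] .
    have cPhi: "\<forall>x\<in>carr H. \<omega> ((fst \<circ> \<Psi>) x) = (\<pi> \<circ> \<tau>) x"
      using PsiS sPsi unfolding S_def by auto
    have uPhi: "\<forall>x\<in>carr H. h' x = (fst \<circ> \<Psi>) x"
      if h': "hom n H P h'" "\<forall>x\<in>carr H. \<omega> (h' x) = (\<pi> \<circ> \<tau>) x" for h'
    proof -
      note lh = lin_simps[OF hom_simps(1)[OF h'(1)]] and lt = lin_simps[OF hom_simps(1)[OF ht]]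
      have hP': "hom n H Q (\<lambda>x. (h' x, \<tau> x))" unfolding hom_def lin_map_def
      proof (intro conjI ballI allI impI)
        show "(h' x, \<tau> x) \<in> carr Q" if "x \<in> carr H" for x
          using that lh(1) lt(1) h'(2) unfolding Q_def S_def by auto
        show "(h' (x + y), \<tau> (x + y)) = (h' x, \<tau> x) + (h' y, \<tau> y)" if "x \<in> carr H" "y \<in> carr H" for x y
          using that lh(2) lt(2) by simp
        show "(h' (smul H c x), \<tau> (smul H c x)) = smul Q c (h' x, \<tau> x)" if "x \<in> carr H" for c x
          using that lh(3) lt(3) by (simp add: Q_def)
        show "(h' (brk H xs), \<tau> (brk H xs)) = brk Q (map (\<lambda>x. (h' x, \<tau> x)) xs)" if "ntuple n H xs" for xs
          using hom_simps(2)[OF h'(1) that] hom_simps(2)[OF ht that] by (simp add: Q_def o_def)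
        show "(h' (tw H x), \<tau> (tw H x)) = tw Q (h' x, \<tau> x)" if "x \<in> carr H" for x
          using that hom_simps(3)[OF h'(1)] hom_simps(3)[OF ht] by (simp add: Q_def)
      qed
      have "\<forall>x\<in>carr H. (h' x, \<tau> x) = \<Psi> x" using uPsi[OF hP'] by simp
      thus ?thesis by (metis comp_apply fst_conv)
    qed
    show ?thesis unfolding lifts_uniquely_def using hPhi cPhi uPhi by blast
  qed
  show ?thesis using alpha lifts by blast
qed



lemma parta:
  fixes L :: "('k::field,'l::ab_group_add) hlnalg" and K :: "('k,'m::ab_group_add) hlnalg"
    and H :: "('k,'h::ab_group_add) hlnalg"
    and \<pi> :: "'m \<Rightarrow> 'l" and \<tau> :: "'h \<Rightarrow> 'm"
  assumes n2: "n \<ge> 2" and cK: "central_ext n K L \<pi>" and cH: "central_ext n H K \<tau>"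
    and UA: "universal_alpha_central_ext n TYPE('q::ab_group_add) H L (\<pi> \<circ> \<tau>)"
    and UAh: "universal_alpha_central_ext n TYPE('h \<times> 'l) H L (\<pi> \<circ> \<tau>)"
  shows "universal_central_ext n TYPE('q) H K \<tau>"
proof -
  have hK: "hom_leibniz n K" and hL: "hom_leibniz n L" and hp: "hom n K L \<pi>" and sp: "\<pi> ` carr K = carr L"
    using cK unfolding central_ext_def ext_def by auto
  have hH: "hom_leibniz n H" and ht: "hom n H K \<tau>" and st: "\<tau> ` carr H = carr K"
    using cH unfolding central_ext_def ext_def by auto
  have eHL: "ext n H L (\<pi> \<circ> \<tau>)" using ext_comp cK cH unfolding central_ext_def by blast
  have perf: "carr H \<subseteq> Dsp n H"
  proof (rule perfect[OF hH hL n2])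
    show "hom n H L (\<pi> \<circ> \<tau>)" "(\<pi> \<circ> \<tau>) ` carr H = carr L" using eHL unfolding ext_def by auto
    fix Q :: "('k, 'h \<times> 'l) hlnalg" assume "alpha_central_ext n Q L snd"
    thus "lifts_uniquely n H Q snd (\<pi> \<circ> \<tau>)" using UAh unfolding universal_alpha_central_ext_def by blast
  qed
  have lifts: "lifts_uniquely n H P \<sigma> \<tau>" if cP: "central_ext n P K \<sigma>" for P :: "('k, 'q) hlnalg" and \<sigma>
  proof -
    have hP: "hom_leibniz n P" and hs: "hom n P K \<sigma>" and ss: "\<sigma> ` carr P = carr K"
      using cP unfolding central_ext_def ext_def by auto
    let ?D = "Dsp n P"
    have DP: "?D \<subseteq> carr P" using Dsp_carr[OF hP] by blast
    define Q where "Q = P\<lparr>carr := ?D\<rparr>"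
    have Qhl: "hom_leibniz n Q" unfolding Q_def
    proof (rule sub_hl[OF hP DP Dsp.D0])
      show "x + y \<in> ?D" if "x \<in> ?D" "y \<in> ?D" for x y using Dsp.Dadd that .
      show "smul P c x \<in> ?D" if "x \<in> ?D" for c x using Dsp.Dsm that .
      show "brk P xs \<in> ?D" if "length xs = n" "set xs \<subseteq> ?D" for xs
        using that DP by (intro Dsp.Dbr) (auto simp: ntuple_def)
      show "tw P x \<in> ?D" if "x \<in> ?D" for x using Dsp_tw[OF hP that] .
    qed
    have hps: "hom n P L (\<pi> \<circ> \<sigma>)" using hom_comp[OF hs hp] .
    have hQL: "hom n Q L (\<pi> \<circ> \<sigma>)" unfolding Q_def using hom_restr[OF hps DP] .
    have surjQ: "(\<pi> \<circ> \<sigma>) ` ?D = carr L"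
    proof
      show "(\<pi> \<circ> \<sigma>) ` ?D \<subseteq> carr L" using DP lin_simps(1)[OF hom_simps(1)[OF hps]] by auto
      show "carr L \<subseteq> (\<pi> \<circ> \<sigma>) ` ?D"
      proof
        fix l assume "l \<in> carr L"
        then obtain h where h: "h \<in> carr H" "l = \<pi> (\<tau> h)" using eHL unfolding ext_def by auto
        obtain q where "q \<in> ?D" "\<sigma> q = \<tau> h" using lift_D[OF hH hP ht hs ss] perf h(1) by blast
        thus "l \<in> (\<pi> \<circ> \<sigma>) ` ?D" using h by force
      qed
    qed
    let ?G = "kernel P (\<pi> \<circ> \<sigma>)"
    have G: "?G \<subseteq> carr P" unfolding kernel_def by auto
    have cen: "brk P zs \<in> center n P" if "ntuple n P zs" "j < n" "zs ! j \<in> ?G" for zs j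
      using cen_comp[OF cK cP that(1,2)] that(3) unfolding kernel_def by auto
    have aD: "\<And>x xs i. x \<in> Dsp n P \<Longrightarrow> ntuple n P xs \<Longrightarrow> i < n \<Longrightarrow> \<forall>j<n. j \<noteq> i \<longrightarrow> xs ! j \<in> tw P ` ?G \<Longrightarrow> brk P (xs[i := x]) = 0"
      by (rule alpha_D[OF hP n2 G], erule (2) cen, assumption+)
    have aQ: "alpha_central_ext n Q L (\<pi> \<circ> \<sigma>)" unfolding alpha_central_ext_def
    proof (intro conjI allI impI)
      show "ext n Q L (\<pi> \<circ> \<sigma>)" unfolding ext_def using Qhl hL hQL surjQ by (simp add: Q_def)
      fix xs i assume a: "ntuple n Q xs \<and> i < n \<and> (\<forall>j<n. j \<noteq> i \<longrightarrow> xs ! j \<in> tw Q ` kernel Q (\<pi> \<circ> \<sigma>))"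
      have nP: "ntuple n P xs" using a DP unfolding ntuple_def Q_def by auto
      have xi: "xs ! i \<in> ?D" using a unfolding ntuple_def Q_def by auto
      have kk: "kernel Q (\<pi> \<circ> \<sigma>) \<subseteq> ?G" using DP unfolding kernel_def Q_def by auto
      have "\<forall>j<n. j \<noteq> i \<longrightarrow> xs ! j \<in> tw P ` ?G" using a image_mono[OF kk, of "tw P"] unfolding Q_def by auto
      hence "brk P (xs[i := xs ! i]) = 0" using aD[OF xi nP] a by blast
      thus "brk Q xs = 0" by (simp add: Q_def)
    qed
    obtain \<Phi> where hPhiQ: "hom n H Q \<Phi>" and cPhi: "\<forall>x\<in>carr H. (\<pi> \<circ> \<sigma>) (\<Phi> x) = (\<pi> \<circ> \<tau>) x"
      and uPhi: "\<And>h'. hom n H Q h' \<Longrightarrow> (\<forall>x\<in>carr H. (\<pi> \<circ> \<sigma>) (h' x) = (\<pi> \<circ> \<tau>) x) \<Longrightarrow> (\<forall>x\<in>carr H. h' x = \<Phi> x)"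
      using UA aQ unfolding universal_alpha_central_ext_def lifts_uniquely_def by blast
    have hPhi: "hom n H P \<Phi>" using hom_unrestr[OF hPhiQ[unfolded Q_def] DP] .
    note lphi = lin_simps[OF hom_simps(1)[OF hPhi]] and lt = lin_simps[OF hom_simps(1)[OF ht]]
      and ls = lin_simps[OF hom_simps(1)[OF hs]]
    have vH: "vspace H" and vK: "vspace K" and vP: "vspace P" using hH hK hP hl_simps(1) by auto
    have eq: "\<sigma> (\<Phi> d) = \<tau> d" if "d \<in> Dsp n H" for d
      using that
    proof (induction rule: Dsp.induct)
      case D0 show ?case using lin_zero[OF hom_simps(1)[OF hPhi] vH] lin_zero[OF hom_simps(1)[OF hs] vP]
          lin_zero[OF hom_simps(1)[OF ht] vH] by simp
    next
      case (Dbr xs)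
      have n1: "ntuple n K (map (\<sigma> \<circ> \<Phi>) xs)" "ntuple n K (map \<tau> xs)"
        using ntuple_map[OF Dbr, of "\<sigma> \<circ> \<Phi>" K] ntuple_map[OF Dbr, of \<tau> K] lphi(1) ls(1) lt(1) by auto
      have "\<sigma> (\<Phi> (brk H xs)) = brk K (map (\<sigma> \<circ> \<Phi>) xs)"
        using hom_simps(2)[OF hom_comp[OF hPhi hs] Dbr] by simp
      also have "\<dots> = brk K (map \<tau> xs)"
      proof (rule perturb[OF hK n1(2) n1(1)])
        fix j assume j: "j < n"
        have xj: "xs ! j \<in> carr H" using ntuple_nth[OF Dbr j] .
        have lj: "j < length xs" using Dbr j unfolding ntuple_def by auto
        have c1: "\<sigma> (\<Phi> (xs ! j)) \<in> carr K" "\<tau> (xs ! j) \<in> carr K" using xj lphi(1) ls(1) lt(1) by auto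
        have "\<pi> (\<sigma> (\<Phi> (xs ! j)) - \<tau> (xs ! j)) = 0"
          using lin_diff[OF hom_simps(1)[OF hp] vK c1] cPhi xj by simp
        hence "\<sigma> (\<Phi> (xs ! j)) - \<tau> (xs ! j) \<in> center n K"
          using cK vs_diff[OF vK c1] unfolding central_ext_def kernel_def by auto
        thus "map (\<sigma> \<circ> \<Phi>) xs ! j - map \<tau> xs ! j \<in> center n K" using lj by simp
      qed
      also have "\<dots> = \<tau> (brk H xs)" using hom_simps(2)[OF ht Dbr] by simp
      finally show ?case .
    next
      case (Dadd x y)
      have c: "x \<in> carr H" "y \<in> carr H" using Dsp_carr[OF hH] Dadd(1,2) by auto
      show ?case using lphi(2)[OF c] ls(2)[OF lphi(1)[OF c(1)] lphi(1)[OF c(2)]] lt(2)[OF c] Dadd(3,4) by simp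
    next
      case (Dsm x c)
      have cx: "x \<in> carr H" using Dsp_carr[OF hH] Dsm(1) by auto
      show ?case using lphi(3)[OF cx] ls(3)[OF lphi(1)[OF cx]] lt(3)[OF cx] Dsm(2) by simp
    qed
    have into: "h' x \<in> ?D" if "hom n H P h'" "x \<in> Dsp n H" for h' x
      using that(2)
    proof (induction rule: Dsp.induct)
      case D0 thus ?case using lin_zero[OF hom_simps(1)[OF that(1)] vH] Dsp.D0 by simp
    next
      case (Dbr xs)
      have "ntuple n P (map h' xs)" using ntuple_map[OF Dbr lin_simps(1)[OF hom_simps(1)[OF that(1)]]] .
      hence "brk P (map h' xs) \<in> ?D" by (rule Dsp.Dbr)
      thus ?case using hom_simps(2)[OF that(1) Dbr] by simp
    next
      case (Dadd x y)
      have "h' (x + y) = h' x + h' y" using lin_simps(2)[OF hom_simps(1)[OF that(1)] Dsp_carr[OF hH Dadd(1)] Dsp_carr[OF hH Dadd(2)]] .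
      thus ?case using Dsp.Dadd[OF Dadd(3,4)] by simp
    next
      case (Dsm x c)
      have "h' (smul H c x) = smul P c (h' x)" using lin_simps(3)[OF hom_simps(1)[OF that(1)] Dsp_carr[OF hH Dsm(1)]] .
      thus ?case using Dsp.Dsm[OF Dsm(2)] by simp
    qed
    have uniq: "\<forall>x\<in>carr H. h' x = \<Phi> x" if h': "hom n H P h'" "\<forall>x\<in>carr H. \<sigma> (h' x) = \<tau> x" for h'
    proof -
      have "hom n H Q h'" unfolding Q_def using hom_restr2[OF h'(1)] into[OF h'(1)] perf by blast
      moreover have "\<forall>x\<in>carr H. (\<pi> \<circ> \<sigma>) (h' x) = (\<pi> \<circ> \<tau>) x" using h'(2) by simp
      ultimately show ?thesis using uPhi by blast
    qed
    show ?thesis unfolding lifts_uniquely_def using hPhi eq perf uniq by blast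
  qed
  show ?thesis unfolding universal_central_ext_def using cH lifts by blast
qed


theorem proposition5p8:
  fixes n :: nat
    and L :: "('k::field, 'l::ab_group_add) hlnalg"
    and K :: "('k, 'm::ab_group_add) hlnalg"
    and H :: "('k, 'h::ab_group_add) hlnalg"
    and \<pi> :: "'m \<Rightarrow> 'l" and \<tau> :: "'h \<Rightarrow> 'm"
  assumes "n \<ge> 2"
    and "central_ext n K L \<pi>"
    and "central_ext n H K \<tau>"
  shows "(universal_alpha_central_ext n TYPE('q::ab_group_add) H L (\<pi> \<circ> \<tau>) \<and>
          universal_alpha_central_ext n TYPE('h \<times> 'l) H L (\<pi> \<circ> \<tau>) \<and>
          universal_alpha_central_ext n TYPE('q \<times> 'l) H L (\<pi> \<circ> \<tau>)
            \<longrightarrow> universal_central_ext n TYPE('q) H K \<tau>)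
       \<and> (universal_central_ext n TYPE('q \<times> 'm) H K \<tau> \<and>
          universal_central_ext n TYPE('h \<times> 'm) H K \<tau> \<and>
          universal_central_ext n TYPE('q) H K \<tau>
            \<longrightarrow> alpha_central_ext n H L (\<pi> \<circ> \<tau>) \<and>
                (\<forall>(P :: ('k, 'q) hlnalg) \<omega>. central_ext n P L \<omega> \<longrightarrow> lifts_uniquely n H P \<omega> (\<pi> \<circ> \<tau>)))"
proof (intro conjI impI)
  assume a: "universal_alpha_central_ext n TYPE('q::ab_group_add) H L (\<pi> \<circ> \<tau>) \<and>
          universal_alpha_central_ext n TYPE('h \<times> 'l) H L (\<pi> \<circ> \<tau>) \<and>
          universal_alpha_central_ext n TYPE('q \<times> 'l) H L (\<pi> \<circ> \<tau>)"
  show "universal_central_ext n TYPE('q) H K \<tau>"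
    using parta[OF assms(1,2,3)] a by blast
next
  assume a: "universal_central_ext n TYPE('q \<times> 'm) H K \<tau> \<and>
          universal_central_ext n TYPE('h \<times> 'm) H K \<tau> \<and>
          universal_central_ext n TYPE('q) H K \<tau>"
  show "alpha_central_ext n H L (\<pi> \<circ> \<tau>)" using partb[OF assms(1,2,3)] a by blast
  show "\<forall>(P :: ('k, 'q) hlnalg) \<omega>. central_ext n P L \<omega> \<longrightarrow> lifts_uniquely n H P \<omega> (\<pi> \<circ> \<tau>)"
    using partb[OF assms(1,2,3)] a by blast
qed

end
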